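(* $\mathrm{Prim}\,\mathcal Mag(2)=K\cdot[x_1,x_2]$. The space $\mathrm{Prim}\,\mathcal Mag(3)$ has dimension $8$ and is generated by the operations $(x_1,x_2,x_3)_b$ and $[[x_1,x_2],x_3]$, which satisfy $[[x_2,x_1],x_3]=-[[x_1,x_2],x_3]$ and the non-associative Jacobi relation $$[[x_1,x_2],x_3]+[[x_3,x_1],x_2]+[[x_2,x_3],x_1]=(x_1,x_2,x_3)_b-(x_2,x_1,x_3)_b+(x_3,x_1,x_2)_b-(x_1,x_3,x_2)_b+(x_2,x_3,x_1)_b-(x_3,x_2,x_1)_b.$$ Moreover, as a representation of $\Sigma_3$, $\mathrm{Prim}\,\mathcal Mag(3)\cong V_{(3)}\oplus3\,V_{(2,1)}\oplus V_{(1,1,1)}$.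
   Context: $K$ is a field of characteristic $0$. $K\{x_1,\dots,x_n\}$ is the free unitary magma algebra (non-associative, non-commutative, unit $1$, product $a\cdot b$) on $x_1,\dots,x_n$. The tensor square is a magma algebra componentwise, with $1\cdot a=a\cdot1=a$, and the co-addition $\Delta_a$ is the unital algebra homomorphism with $\Delta_a(x_i)=x_i\otimes1+1\otimes x_i$; $f$ is primitive if $\Delta_a(f)=f\otimes1+1\otimes f$. $\mathrm{Prim}\,\mathcal Mag(n)$ is the space of primitive elements multilinear of degree $n$ in $x_1,\dots,x_n$, with $\Sigma_n$ acting by permuting variables; "generated" refers to the $\Sigma_n$-action and linear combinations. Notation: $[a,b]=a\cdot b-b\cdot a$, $(a,b,c)_b=(a\cdot b)\cdot c-a\cdot(b\cdot c)$. $V_\lambda$ is the irreducible $\Sigma_3$-module for the partition $\lambda$ ($V_{(3)}$ trivial, $V_{(2,1)}$ two-dimensional, $V_{(1,1,1)}$ sign). *)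

theory Defs
  imports Complex_Main "HOL-Library.Function_Algebras" "HOL-Combinatorics.Permutations"
begin

text \<open>Non-associative, non-commutative monomials (binary trees, leaves = variables x_i).
  A basis word of the unitary magma is either the unit (None) or Some t.\<close>
datatype tree = Leaf nat | Node tree tree

type_synonym word = "tree option"

fun wmul :: "word \<Rightarrow> word \<Rightarrow> word" where
  "wmul None v = v"
| "wmul u None = u"
| "wmul (Some a) (Some b) = Some (Node a b)"

text \<open>Elements of K{x_1,...}: finitely supported coefficient functions on words
  (all elements used below have finite support). Addition is pointwise.\<close>
type_synonym 'a mag = "word \<Rightarrow> 'a"

definition mscale :: "'a::field \<Rightarrow> 'a mag \<Rightarrow> 'a mag" where
  "mscale c f = (\<lambda>w. c * f w)"

definition mmul :: "'a::field mag \<Rightarrow> 'a mag \<Rightarrow> 'a mag" where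
  "mmul f g = (\<lambda>w. \<Sum>(u,v)\<in>{(u,v). f u \<noteq> 0 \<and> g v \<noteq> 0 \<and> wmul u v = w}. f u * g v)"

definition var :: "nat \<Rightarrow> 'a::field mag" where
  "var i = (\<lambda>w. if w = Some (Leaf i) then 1 else 0)"

definition bracket :: "'a::field mag \<Rightarrow> 'a mag \<Rightarrow> 'a mag" where
  "bracket a b = mmul a b - mmul b a"

definition assoc_b :: "'a::field mag \<Rightarrow> 'a mag \<Rightarrow> 'a mag \<Rightarrow> 'a mag" where
  "assoc_b a b c = mmul (mmul a b) c - mmul a (mmul b c)"

type_synonym 'a ten = "word \<times> word \<Rightarrow> 'a"

fun pmul :: "word \<times> word \<Rightarrow> word \<times> word \<Rightarrow> word \<times> word" where
  "pmul (a1, a2) (b1, b2) = (wmul a1 b1, wmul a2 b2)"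

definition tmul :: "'a::field ten \<Rightarrow> 'a ten \<Rightarrow> 'a ten" where
  "tmul F G = (\<lambda>p. \<Sum>(a,b)\<in>{(a,b). F a \<noteq> 0 \<and> G b \<noteq> 0 \<and> pmul a b = p}. F a * G b)"

text \<open>Co-addition on basis monomials: the unital magma homomorphism with
  x_i \<mapsto> x_i \<otimes> 1 + 1 \<otimes> x_i.\<close>
fun deltaT :: "tree \<Rightarrow> 'a::field ten" where
  "deltaT (Leaf i) = (\<lambda>p. if p = (Some (Leaf i), None) \<or> p = (None, Some (Leaf i)) then 1 else 0)"
| "deltaT (Node a b) = tmul (deltaT a) (deltaT b)"

fun delta_w :: "word \<Rightarrow> 'a::field ten" where
  "delta_w None = (\<lambda>p. if p = (None, None) then 1 else 0)"
| "delta_w (Some t) = deltaT t"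

definition Delta :: "'a::field mag \<Rightarrow> 'a ten" where
  "Delta f = (\<lambda>p. \<Sum>w\<in>{w. f w \<noteq> 0}. f w * delta_w w p)"

definition primitive :: "'a::field mag \<Rightarrow> bool" where
  "primitive f \<longleftrightarrow>
     Delta f = (\<lambda>(u,v). (if v = None then f u else 0) + (if u = None then f v else 0))"

fun leaves :: "tree \<Rightarrow> nat list" where
  "leaves (Leaf i) = [i]"
| "leaves (Node a b) = leaves a @ leaves b"

definition multilin_word :: "nat \<Rightarrow> word \<Rightarrow> bool" where
  "multilin_word n w \<longleftrightarrow> (\<exists>t. w = Some t \<and> mset (leaves t) = mset [1..<n+1])"

definition Prim :: "nat \<Rightarrow> 'a::field mag set" where
  "Prim n = {f. (\<forall>w. f w \<noteq> 0 \<longrightarrow> multilin_word n w) \<and> primitive f}"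

fun relabel :: "(nat \<Rightarrow> nat) \<Rightarrow> tree \<Rightarrow> tree" where
  "relabel g (Leaf i) = Leaf (g i)"
| "relabel g (Node a b) = Node (relabel g a) (relabel g b)"

text \<open>Action of a permutation \<sigma>: substitute x_i \<mapsto> x_(\<sigma> i).\<close>
definition act :: "(nat \<Rightarrow> nat) \<Rightarrow> 'a mag \<Rightarrow> 'a mag" where
  "act \<sigma> f = (\<lambda>w. f (map_option (relabel (inv \<sigma>)) w))"

definition mspan :: "'a::field mag set \<Rightarrow> 'a mag set" where
  "mspan S = module.span mscale S"

definition mdim :: "'a::field mag set \<Rightarrow> nat" where
  "mdim S = vector_space.dim mscale S"

text \<open>V_(2,1): the standard representation {u \<in> K^3 | u_1+u_2+u_3 = 0}, coordinates indexed by 1,2,3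
  (functions nat \<Rightarrow> K vanishing outside {1,2,3}), with \<sigma> permuting coordinates.\<close>
definition V21 :: "(nat \<Rightarrow> 'a::field) set" where
  "V21 = {u. (\<forall>i. i \<notin> {1,2,3} \<longrightarrow> u i = 0) \<and> u 1 + u 2 + u 3 = 0}"

definition pact :: "(nat \<Rightarrow> nat) \<Rightarrow> (nat \<Rightarrow> 'a) \<Rightarrow> (nat \<Rightarrow> 'a)" where
  "pact \<sigma> u = (\<lambda>i. u (inv \<sigma> i))"

type_synonym 'a target = "'a \<times> (nat \<Rightarrow> 'a) \<times> (nat \<Rightarrow> 'a) \<times> (nat \<Rightarrow> 'a) \<times> 'a"

text \<open>First component: V_(3) (trivial); three copies of V_(2,1); last component: V_(1,1,1) (sign).\<close>
definition Target :: "'a::field target set" where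
  "Target = {(a, u1, u2, u3, s). u1 \<in> V21 \<and> u2 \<in> V21 \<and> u3 \<in> V21}"

definition tadd :: "'a::field target \<Rightarrow> 'a target \<Rightarrow> 'a target" where
  "tadd x y = (case x of (a, u1, u2, u3, s) \<Rightarrow> case y of (b, v1, v2, v3, r) \<Rightarrow>
      (a + b, u1 + v1, u2 + v2, u3 + v3, s + r))"

definition tscale :: "'a::field \<Rightarrow> 'a target \<Rightarrow> 'a target" where
  "tscale c x = (case x of (a, u1, u2, u3, s) \<Rightarrow>
      (c * a, (\<lambda>i. c * u1 i), (\<lambda>i. c * u2 i), (\<lambda>i. c * u3 i), c * s))"

definition tact :: "(nat \<Rightarrow> nat) \<Rightarrow> 'a::field target \<Rightarrow> 'a target" where
  "tact \<sigma> x = (case x of (a, u1, u2, u3, s) \<Rightarrow>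
      (a, pact \<sigma> u1, pact \<sigma> u2, pact \<sigma> u3, of_int (sign \<sigma>) * s))"

definition sigma3_iso :: "('a::field mag \<Rightarrow> 'a target) \<Rightarrow> bool" where
  "sigma3_iso \<phi> \<longleftrightarrow>
     bij_betw \<phi> (Prim 3) Target \<and>
     (\<forall>f\<in>Prim 3. \<forall>g\<in>Prim 3. \<phi> (f + g) = tadd (\<phi> f) (\<phi> g)) \<and>
     (\<forall>c. \<forall>f\<in>Prim 3. \<phi> (mscale c f) = tscale c (\<phi> f)) \<and>
     (\<forall>\<sigma>. \<sigma> permutes {1,2,3} \<longrightarrow> (\<forall>f\<in>Prim 3. \<phi> (act \<sigma> f) = tact \<sigma> (\<phi> f)))"

end

theory Submission
  imports Defs
begin

definition lc :: "('a::field \<times> 'b) list \<Rightarrow> 'b \<Rightarrow> 'a" where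
  "lc xs = (\<lambda>w. sum_list (map (\<lambda>(c,u). if u = w then c else 0) xs))"

lemma lc_Nil[simp]: "lc [] = 0" by (simp add: lc_def fun_eq_iff)
lemma lc_Cons: "lc (p # xs) = lc [p] + lc xs" by (simp add: lc_def fun_eq_iff split: prod.splits)
lemma lc_append: "lc (xs @ ys) = lc xs + lc ys" by (simp add: lc_def fun_eq_iff)
lemma lc_apply: "lc xs w = sum_list (map (\<lambda>(c,u). if u = w then c else 0) xs)" by (simp add: lc_def)

lemma lc_supp: "lc xs w \<noteq> 0 \<Longrightarrow> w \<in> snd ` set xs"
proof (induction xs)
  case Nil then show ?case by simp
next
  case (Cons p xs) then show ?case by (cases p) (auto simp: lc_def split: if_splits)
qed

definition genmul :: "('b \<Rightarrow> 'b \<Rightarrow> 'b) \<Rightarrow> ('b \<Rightarrow> 'a::field) \<Rightarrow> ('b \<Rightarrow> 'a) \<Rightarrow> 'b \<Rightarrow> 'a" where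
  "genmul op F G = (\<lambda>x. \<Sum>(a,b)\<in>{(a,b). F a \<noteq> 0 \<and> G b \<noteq> 0 \<and> op a b = x}. F a * G b)"

lemma mmul_gen: "mmul = genmul wmul" by (simp add: fun_eq_iff mmul_def genmul_def)
lemma tmul_gen: "tmul = genmul pmul" by (simp add: fun_eq_iff tmul_def genmul_def)

lemma genmul_formula:
  assumes "finite A" "finite B" "\<And>a. F a \<noteq> 0 \<Longrightarrow> a \<in> A" "\<And>b. G b \<noteq> 0 \<Longrightarrow> b \<in> B"
  shows "genmul op F G x = (\<Sum>(a,b)\<in>A \<times> B. if op a b = x then F a * G b else 0)"
proof -
  have "genmul op F G x = (\<Sum>(a,b)\<in>{(a,b). F a \<noteq> 0 \<and> G b \<noteq> 0 \<and> op a b = x}. if op a b = x then F a * G b else 0)"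
    unfolding genmul_def by (intro sum.cong) auto
  also have "\<dots> = (\<Sum>(a,b)\<in>A \<times> B. if op a b = x then F a * G b else 0)"
    apply (rule sum.mono_neutral_left)
    using assms by (auto split: if_splits)
  finally show ?thesis .
qed

definition fsupp :: "('b \<Rightarrow> 'a::zero) \<Rightarrow> bool" where
  "fsupp F \<longleftrightarrow> finite {a. F a \<noteq> 0}"

lemma fsupp_lc: "fsupp (lc xs)"
  unfolding fsupp_def by (rule finite_subset[of _ "snd ` set xs"]) (auto dest: lc_supp)

lemma genmul_add_left:
  assumes "fsupp F1" "fsupp F2" "fsupp G"
  shows "genmul op (F1 + F2) G = genmul op F1 G + genmul op F2 G"
proof
  fix x
  let ?A = "{a. F1 a \<noteq> 0} \<union> {a. F2 a \<noteq> 0}" and ?B = "{b. G b \<noteq> 0}"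
  have f: "finite ?A" "finite ?B" using assms by (auto simp: fsupp_def)
  show "genmul op (F1 + F2) G x = (genmul op F1 G + genmul op F2 G) x"
    apply (simp only: plus_fun_apply)
    apply (subst (1 2 3) genmul_formula[OF f])
    by (auto simp: sum.distrib[symmetric] distrib_right intro!: sum.cong)
qed

lemma genmul_add_right:
  assumes "fsupp F" "fsupp G1" "fsupp G2"
  shows "genmul op F (G1 + G2) = genmul op F G1 + genmul op F G2"
proof
  fix x
  let ?B = "{a. G1 a \<noteq> 0} \<union> {a. G2 a \<noteq> 0}" and ?A = "{b. F b \<noteq> 0}"
  have f: "finite ?A" "finite ?B" using assms by (auto simp: fsupp_def)
  show "genmul op F (G1 + G2) x = (genmul op F G1 + genmul op F G2) x"
    apply (simp only: plus_fun_apply)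
    apply (subst (1 2 3) genmul_formula[OF f])
    by (auto simp: sum.distrib[symmetric] distrib_left intro!: sum.cong)
qed

lemma genmul_single: "genmul op (lc [(c,u)]) (lc [(d,v)]) = lc [(c*d, op u v)]"
proof
  fix x
  show "genmul op (lc [(c,u)]) (lc [(d,v)]) x = lc [(c*d, op u v)] x"
    apply (subst genmul_formula[of "{u}" "{v}"])
    by (auto simp: lc_def split: if_splits)
qed

lemma genmul_Nil_left: "genmul op (lc []) G = lc []"
  by (simp add: genmul_def fun_eq_iff)
lemma genmul_Nil_right: "genmul op F (lc []) = lc []"
  by (simp add: genmul_def fun_eq_iff)

definition lcmul :: "('b \<Rightarrow> 'b \<Rightarrow> 'b) \<Rightarrow> ('a::field \<times> 'b) list \<Rightarrow> ('a \<times> 'b) list \<Rightarrow> ('a \<times> 'b) list" where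
  "lcmul op xs ys = concat (map (\<lambda>(c,u). map (\<lambda>(d,v). (c*d, op u v)) ys) xs)"

lemma lcmul_simps[simp]:
  "lcmul op [] ys = []"
  "lcmul op ((c,u)#xs) ys = map (\<lambda>(d,v). (c*d, op u v)) ys @ lcmul op xs ys"
  by (simp_all add: lcmul_def)

lemma genmul_lc1: "genmul op (lc [p]) (lc ys) = lc (map (\<lambda>(d,v). (fst p*d, op (snd p) v)) ys)"
proof (induction ys)
  case Nil then show ?case by (simp only: genmul_Nil_right) simp
next
  case (Cons q ys)
  obtain c u where p: "p = (c,u)" by (cases p)
  obtain d v where q: "q = (d,v)" by (cases q)
  have "genmul op (lc [p]) (lc (q # ys)) = genmul op (lc [p]) (lc [q] + lc ys)"
    by (subst lc_Cons[of q ys]) (rule refl)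
  also have "\<dots> = genmul op (lc [p]) (lc [q]) + genmul op (lc [p]) (lc ys)"
    by (rule genmul_add_right) (simp_all add: fsupp_lc)
  also have "\<dots> = lc [(c*d, op u v)] + lc (map (\<lambda>(d,v). (fst p*d, op (snd p) v)) ys)"
    using Cons by (simp add: genmul_single p q)
  also have "\<dots> = lc (map (\<lambda>(d,v). (fst p*d, op (snd p) v)) (q # ys))"
    by (simp add: p q) (rule lc_Cons[symmetric])
  finally show ?case .
qed

lemma genmul_lc: "genmul op (lc xs) (lc ys) = lc (lcmul op xs ys)"
proof (induction xs)
  case Nil then show ?case by (simp only: genmul_Nil_left) simp
next
  case (Cons p xs)
  obtain c u where p: "p = (c,u)" by (cases p)
  have "genmul op (lc (p # xs)) (lc ys) = genmul op (lc [p] + lc xs) (lc ys)"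
    by (subst lc_Cons[of p xs]) (rule refl)
  also have "\<dots> = genmul op (lc [p]) (lc ys) + genmul op (lc xs) (lc ys)"
    by (rule genmul_add_left) (simp_all add: fsupp_lc)
  also have "\<dots> = lc (lcmul op (p # xs) ys)"
    using Cons by (simp add: genmul_lc1 lc_append p)
  finally show ?case .
qed

fun dl :: "tree \<Rightarrow> ('a::field \<times> (word \<times> word)) list" where
  "dl (Leaf i) = [(1,(Some (Leaf i), None)), (1,(None, Some (Leaf i)))]"
| "dl (Node a b) = lcmul pmul (dl a) (dl b)"

lemma deltaT_lc: "deltaT t = lc (dl t)"
proof (induction t)
  case (Leaf i) then show ?case by (auto simp: lc_def fun_eq_iff)
next
  case (Node a b) then show ?case by (simp add: tmul_gen genmul_lc)
qed

fun dlw :: "word \<Rightarrow> ('a::field \<times> (word \<times> word)) list" where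
  "dlw None = [(1,(None,None))]"
| "dlw (Some t) = dl t"

lemma delta_w_lc: "delta_w w = lc (dlw w)"
  by (cases w) (auto simp: lc_def fun_eq_iff deltaT_lc)

lemma lc_eqI:
  assumes "\<And>w. w \<in> snd ` set xs \<union> snd ` set ys \<Longrightarrow> lc xs w = lc ys w"
  shows "lc xs = lc ys"
proof
  fix w show "lc xs w = lc ys w"
  proof (cases "w \<in> snd ` set xs \<union> snd ` set ys")
    case True then show ?thesis using assms by blast
  next
    case False
    then have "lc xs w = 0" "lc ys w = 0" using lc_supp[of xs w] lc_supp[of ys w] by blast+
    then show ?thesis by simp
  qed
qed

lemma lc_eq_iff: "lc xs = lc ys \<longleftrightarrow> (\<forall>w \<in> snd ` set xs \<union> snd ` set ys. lc xs w = lc ys w)"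
  using lc_eqI by metis

definition scl :: "'a::field \<Rightarrow> ('a \<times> 'b) list \<Rightarrow> ('a \<times> 'b) list" where
  "scl c xs = map (\<lambda>(d,q). (c*d,q)) xs"

lemma lc_scl: "lc (scl c xs) w = c * lc xs w"
  by (induction xs) (auto simp: scl_def lc_def distrib_left)

lemma sum_list_if_distinct:
  "distinct ws \<Longrightarrow> sum_list (map (\<lambda>w. if w = u then g w else 0) ws) = (if u \<in> set ws then g u else (0::'a::comm_monoid_add))"
  by (induction ws) auto

lemma Delta_lc:
  assumes d: "distinct ws" and s: "\<And>w. f w \<noteq> 0 \<Longrightarrow> w \<in> set ws"
  shows "Delta f = lc (concat (map (\<lambda>w. scl (f w) (dlw w)) ws))"
proof
  fix p
  have "Delta f p = (\<Sum>w\<in>set ws. f w * delta_w w p)"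
    unfolding Delta_def by (rule sum.mono_neutral_left) (use s in auto)
  also have "\<dots> = sum_list (map (\<lambda>w. f w * delta_w w p) ws)"
    using d by (simp add: sum_list_distinct_conv_sum_set)
  also have "\<dots> = lc (concat (map (\<lambda>w. scl (f w) (dlw w)) ws)) p"
    by (induction ws) (simp_all add: lc_append lc_scl delta_w_lc)
  finally show "Delta f p = lc (concat (map (\<lambda>w. scl (f w) (dlw w)) ws)) p" .
qed

lemma lc_map_if:
  "lc (map (\<lambda>w. (g w, h w)) ws) q = sum_list (map (\<lambda>w. if h w = q then g w else 0) ws)"
  by (induction ws) (auto simp: lc_def)

lemma prim_rhs_lc:
  fixes f :: "'a::field mag"
  assumes d: "distinct ws" and s: "\<And>w. f w \<noteq> 0 \<Longrightarrow> w \<in> set ws" and n: "None \<notin> set ws"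
  shows "(\<lambda>(u,v). (if v = None then f u else 0) + (if u = None then f v else 0))
     = lc (map (\<lambda>w. (f w, (w, None))) ws @ map (\<lambda>w. (f w, (None, w))) ws)"
proof
  fix p :: "word \<times> word"
  obtain u v where p: "p = (u,v)" by (cases p)
  have 1: "lc (map (\<lambda>w. (f w, (w, None))) ws) (u,v) = (if v = None then f u else 0)"
    unfolding lc_map_if using sum_list_if_distinct[OF d, of u f] s
    by (cases "v = None") auto
  have 2: "lc (map (\<lambda>w. (f w, (None, w))) ws) (u,v) = (if u = None then f v else 0)"
    unfolding lc_map_if using sum_list_if_distinct[OF d, of v f] s
    by (cases "u = None") auto
  show "(case p of (u,v) \<Rightarrow> (if v = None then f u else 0) + (if u = None then f v else 0)) =
     lc (map (\<lambda>w. (f w, (w, None))) ws @ map (\<lambda>w. (f w, (None, w))) ws) p"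
    using 1 2 by (simp add: p lc_append)
qed

lemma primitive_lc:
  fixes f :: "'a::field mag"
  assumes d: "distinct ws" and s: "\<And>w. f w \<noteq> 0 \<Longrightarrow> w \<in> set ws" and n: "None \<notin> set ws"
  shows "primitive f \<longleftrightarrow> lc (concat (map (\<lambda>w. scl (f w) (dlw w)) ws)) =
      lc (map (\<lambda>w. (f w, (w, None))) ws @ map (\<lambda>w. (f w, (None, w))) ws)"
proof -
  have 1: "Delta f = lc (concat (map (\<lambda>w. scl (f w) (dlw w)) ws))" by (rule Delta_lc[OF d s])
  have 2: "(\<lambda>(u,v). (if v = None then f u else 0) + (if u = None then f v else 0))
     = lc (map (\<lambda>w. (f w, (w, None))) ws @ map (\<lambda>w. (f w, (None, w))) ws)" by (rule prim_rhs_lc[OF d s n])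
  show ?thesis unfolding primitive_def 1 2 ..
qed

abbreviation "L i \<equiv> Leaf i"
abbreviation "P a b c \<equiv> Some (Node (Node (Leaf a) (Leaf b)) (Leaf c))"
abbreviation "Q a b c \<equiv> Some (Node (Leaf a) (Node (Leaf b) (Leaf c)))"

definition "W2 = [Some (Node (L 1) (L 2)), Some (Node (L 2) (L 1))]"
definition "W3 = [P 1 2 3, P 1 3 2, P 2 1 3, P 2 3 1, P 3 1 2, P 3 2 1,
                  Q 1 2 3, Q 1 3 2, Q 2 1 3, Q 2 3 1, Q 3 1 2, Q 3 2 1]"

lemma W2_facts: "distinct W2" "None \<notin> set W2" by (simp_all add: W2_def)
lemma W3_facts: "distinct W3" "None \<notin> set W3" by (simp_all add: W3_def)

lemma prim2_test:
  assumes s: "\<And>w. f w \<noteq> 0 \<Longrightarrow> w \<in> set W2"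
  shows "primitive (f::'a::field mag) \<longleftrightarrow> f (Some (Node (L 1) (L 2))) + f (Some (Node (L 2) (L 1))) = 0"
  apply (subst primitive_lc[OF W2_facts(1) _ W2_facts(2)])
  using s apply blast
  apply (subst lc_eq_iff)
  apply (simp add: W2_def scl_def lc_def)
  done

definition con3 :: "'a::field mag \<Rightarrow> nat \<Rightarrow> nat \<Rightarrow> nat \<Rightarrow> bool" where
  "con3 f i j k \<longleftrightarrow> f (P i j k) + f (P j i k) + f (P j k i) + f (Q i j k) + f (Q j i k) + f (Q j k i) = 0"

definition "EQS f \<longleftrightarrow> con3 f 1 2 3 \<and> con3 f 1 3 2 \<and> con3 f 2 1 3 \<and> con3 f 2 3 1 \<and> con3 f 3 1 2 \<and> con3 f 3 2 1"

lemma prim3_test: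
  assumes s: "\<And>w. f w \<noteq> 0 \<Longrightarrow> w \<in> set W3"
  shows "primitive (f::'a::field mag) \<longleftrightarrow> EQS f"
  apply (subst primitive_lc[OF W3_facts(1) _ W3_facts(2)])
  using s apply blast
  apply (subst lc_eq_iff)
  apply (simp add: W3_def scl_def lc_def)
  apply (simp add: EQS_def con3_def add_ac)
  apply blast
  done

lemma leaves_ne: "leaves t \<noteq> []"
  by (induction t) auto

lemma len_pos: "length (leaves t) \<ge> 1"
  using leaves_ne[of t] by (cases "leaves t") auto

lemma len1: "length (leaves t) = 1 \<Longrightarrow> \<exists>i. t = Leaf i"
proof (cases t)
  case (Node a b)
  assume "length (leaves t) = 1"
  then show ?thesis using len_pos[of a] len_pos[of b] Node by simp
qed auto

lemma len2: "length (leaves t) = 2 \<Longrightarrow> \<exists>i j. t = Node (Leaf i) (Leaf j)"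
proof (cases t)
  case (Node a b)
  assume "length (leaves t) = 2"
  then have "length (leaves a) = 1" "length (leaves b) = 1"
    using len_pos[of a] len_pos[of b] Node by simp_all
  then show ?thesis using len1[of a] len1[of b] Node by auto
qed auto

lemma len3: "length (leaves t) = 3 \<Longrightarrow> \<exists>i j k. t = Node (Node (Leaf i) (Leaf j)) (Leaf k) \<or> t = Node (Leaf i) (Node (Leaf j) (Leaf k))"
proof (cases t)
  case (Node a b)
  assume "length (leaves t) = 3"
  then have "(length (leaves a) = 1 \<and> length (leaves b) = 2) \<or> (length (leaves a) = 2 \<and> length (leaves b) = 1)"
    using len_pos[of a] len_pos[of b] Node by auto
  then show ?thesis using len1[of a] len1[of b] len2[of a] len2[of b] Node by auto
qed auto

lemma mset3: "mset [i,j,k] = mset [1,2,3::nat] \<Longrightarrow>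
   (i,j,k) \<in> {(1,2,3),(1,3,2),(2,1,3),(2,3,1),(3,1,2),(3,2,1)}"
proof -
  assume m: "mset [i,j,k] = mset [1,2,3::nat]"
  then have se: "set [i,j,k] = set [1,2,3::nat]" by (rule mset_eq_setD)
  have d: "distinct [i,j,k]" using mset_eq_imp_distinct_iff[OF m] by simp
  have "i \<in> set [1,2,3::nat]" "j \<in> set [1,2,3::nat]" "k \<in> set [1,2,3::nat]" unfolding se[symmetric] by simp_all
  then have "(i = 1 \<or> i = 2 \<or> i = 3) \<and> (j = 1 \<or> j = 2 \<or> j = 3) \<and> (k = 1 \<or> k = 2 \<or> k = 3)" by simp
  then show ?thesis using d by (elim conjE disjE) simp_all
qed

lemma mset2: "mset [i,j] = mset [1,2::nat] \<Longrightarrow> (i,j) \<in> {(1,2),(2,1)}"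
proof -
  assume m: "mset [i,j] = mset [1,2::nat]"
  then have se: "set [i,j] = set [1,2::nat]" by (rule mset_eq_setD)
  have d: "distinct [i,j]" using mset_eq_imp_distinct_iff[OF m] by simp
  have "i \<in> set [1,2::nat]" "j \<in> set [1,2::nat]" unfolding se[symmetric] by simp_all
  then have "(i = 1 \<or> i = 2) \<and> (j = 1 \<or> j = 2)" by simp
  then show ?thesis using d by (elim conjE disjE) simp_all
qed

lemma ml2: "multilin_word 2 w \<longleftrightarrow> w \<in> set W2"
proof
  assume "multilin_word 2 w"
  then obtain t where t: "w = Some t" "mset (leaves t) = mset [1..<3]" by (auto simp: multilin_word_def)
  have u: "[1..<3] = [1,2::nat]" by (simp add: upt_rec)
  have "length (leaves t) = 2" using mset_eq_length[OF t(2)] unfolding u by simp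
  then obtain i j where "t = Node (Leaf i) (Leaf j)" using len2 by blast
  then show "w \<in> set W2" using t mset2[of i j] unfolding u by (auto simp: W2_def)
next
  assume "w \<in> set W2" then show "multilin_word 2 w"
    by (auto simp: W2_def multilin_word_def upt_rec add_mset_commute)
qed

lemma mset3_conv: "(i,j,k) \<in> {(1,2,3),(1,3,2),(2,1,3),(2,3,1),(3,1,2),(3,2,1)} \<Longrightarrow> mset [i,j,k] = mset [1,2,3::nat]"
  by (elim insertE) (auto simp: add_mset_commute)

lemma ml3: "multilin_word 3 w \<longleftrightarrow> w \<in> set W3"
proof
  assume "multilin_word 3 w"
  then obtain t where t: "w = Some t" "mset (leaves t) = mset [1..<4]" by (auto simp: multilin_word_def)
  have u: "[1..<4] = [1,2,3::nat]" by (simp add: upt_rec)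
  have "length (leaves t) = 3" using mset_eq_length[OF t(2)] unfolding u by simp
  then obtain i j k where disj: "t = Node (Node (Leaf i) (Leaf j)) (Leaf k) \<or> t = Node (Leaf i) (Node (Leaf j) (Leaf k))" using len3 by blast
  then have lt: "leaves t = [i,j,k]" by auto
  have ijk: "(i,j,k) \<in> {(1,2,3),(1,3,2),(2,1,3),(2,3,1),(3,1,2),(3,2,1)}"
    using t(2) unfolding u lt by (rule mset3)
  then have "P i j k \<in> set W3 \<and> Q i j k \<in> set W3" by (auto simp: W3_def)
  then show "w \<in> set W3" using disj t(1) by (elim disjE conjE) simp_all
next
  assume "w \<in> set W3"
  have u: "[1..<3+1] = [1,2,3::nat]" by (simp add: upt_rec)
  show "multilin_word 3 w" using \<open>w \<in> set W3\<close> unfolding multilin_word_def u W3_def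
    by (auto simp: add_mset_commute)
qed

lemma Prim2_char: "(f::'a::field mag) \<in> Prim 2 \<longleftrightarrow> (\<forall>w. f w \<noteq> 0 \<longrightarrow> w \<in> set W2) \<and>
   f (Some (Node (L 1) (L 2))) + f (Some (Node (L 2) (L 1))) = 0"
  unfolding Prim_def ml2 using prim2_test by auto

lemma Prim3_char: "(f::'a::field mag) \<in> Prim 3 \<longleftrightarrow> (\<forall>w. f w \<noteq> 0 \<longrightarrow> w \<in> set W3) \<and> EQS f"
  unfolding Prim_def ml3 using prim3_test by auto

lemma lc_uminus: "- lc xs = lc (scl (-1) xs)"
  by (rule ext) (simp add: lc_scl)

lemma lc_minus: "lc xs - lc ys = lc (xs @ scl (-1) ys)"
  by (simp add: lc_append lc_uminus[symmetric])

lemma mscale_lc: "mscale c (lc xs) = lc (scl c xs)"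
  by (rule ext) (simp add: lc_scl mscale_def)

lemma var_lc: "var i = lc [(1, Some (Leaf i))]"
  by (rule ext) (simp add: var_def lc_def)

lemma mmul_lc: "mmul (lc xs) (lc ys) = lc (lcmul wmul xs ys)"
  by (simp add: mmul_gen genmul_lc)

lemma relabel_comp: "relabel f (relabel g t) = relabel (f \<circ> g) t"
  by (induction t) auto

lemma relabel_id: "relabel id t = t"
  by (induction t) auto

lemma act_lc:
  assumes "bij \<sigma>"
  shows "act \<sigma> (lc xs) = lc (map (\<lambda>(c,w). (c, map_option (relabel \<sigma>) w)) xs)"
proof
  fix w
  have e: "(u = map_option (relabel (inv \<sigma>)) w) \<longleftrightarrow> (map_option (relabel \<sigma>) u = w)" for u
  proof -
    have 1: "\<sigma> \<circ> inv \<sigma> = id" "inv \<sigma> \<circ> \<sigma> = id" using assms unfolding bij_def by (simp_all add: surj_iff[symmetric] inj_iff[symmetric])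
    have "map_option (relabel \<sigma>) (map_option (relabel (inv \<sigma>)) w) = w"
      by (cases w) (simp_all add: relabel_comp 1 relabel_id)
    moreover have "map_option (relabel (inv \<sigma>)) (map_option (relabel \<sigma>) u) = u"
      by (cases u) (simp_all add: relabel_comp 1 relabel_id)
    ultimately show ?thesis by metis
  qed
  show "act \<sigma> (lc xs) w = lc (map (\<lambda>(c,w). (c, map_option (relabel \<sigma>) w)) xs) w"
    unfolding act_def lc_def by (induction xs) (auto simp: e)
qed

lemma lc_W:
  assumes "distinct ws" "\<And>w. f w \<noteq> 0 \<Longrightarrow> w \<in> set ws"
  shows "f = lc (map (\<lambda>w. (f w, w)) ws)"
proof
  fix w
  show "f w = lc (map (\<lambda>w. (f w, w)) ws) w"
    unfolding lc_map_if sum_list_if_distinct[OF assms(1)] using assms(2) by auto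
qed

interpretation MV: vector_space "mscale :: 'a::field \<Rightarrow> 'a mag \<Rightarrow> 'a mag"
  by unfold_locales (simp_all add: mscale_def fun_eq_iff algebra_simps)

lemma jac_test:
  fixes x :: "nat \<Rightarrow> 'a::field mag"
  defines "x \<equiv> var"
  shows "bracket (bracket (x 2) (x 1)) (x 3) = - bracket (bracket (x 1) (x 2)) (x 3)
    \<and> bracket (bracket (x 1) (x 2)) (x 3) + bracket (bracket (x 3) (x 1)) (x 2)
           + bracket (bracket (x 2) (x 3)) (x 1)
         = assoc_b (x 1) (x 2) (x 3) - assoc_b (x 2) (x 1) (x 3) + assoc_b (x 3) (x 1) (x 2)
           - assoc_b (x 1) (x 3) (x 2) + assoc_b (x 2) (x 3) (x 1) - assoc_b (x 3) (x 2) (x 1)"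
  unfolding x_def bracket_def assoc_b_def var_lc mmul_lc lc_minus lc_uminus lc_append[symmetric]
  apply (intro conjI)
   apply (subst lc_eq_iff; simp add: scl_def lc_def)
  apply (subst lc_eq_iff; simp add: scl_def lc_def)
  done

lemma Prim2_eq: "(Prim 2 :: 'a::field mag set) = {mscale c (bracket (var 1) (var 2)) | c. True}"
proof (intro set_eqI iffI)
  fix f :: "'a mag"
  assume "f \<in> Prim 2"
  then have s: "\<And>w. f w \<noteq> 0 \<Longrightarrow> w \<in> set W2" and e: "f (Some (Node (L 1) (L 2))) + f (Some (Node (L 2) (L 1))) = 0"
    unfolding Prim2_char by auto
  have e2: "f (Some (Node (L 2) (L 1))) = - f (Some (Node (L 1) (L 2)))" using e by (simp add: eq_neg_iff_add_eq_0 add.commute)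
  have fe: "f = lc (map (\<lambda>w. (f w, w)) W2)" by (rule lc_W[OF W2_facts(1) s])
  have "lc (map (\<lambda>w. (f w, w)) W2) = mscale (f (Some (Node (L 1) (L 2)))) (bracket (var 1) (var 2))"
    unfolding bracket_def var_lc mmul_lc lc_minus mscale_lc
    apply (subst lc_eq_iff)
    using e2 by (simp add: scl_def lc_def W2_def)
  then have "f = mscale (f (Some (Node (L 1) (L 2)))) (bracket (var 1) (var 2))" using fe by simp
  then show "f \<in> {mscale c (bracket (var 1) (var 2)) | c. True}" by blast
next
  fix f :: "'a mag"
  assume "f \<in> {mscale c (bracket (var 1) (var 2)) | c. True}"
  then obtain c where f: "f = mscale c (bracket (var 1) (var 2))" by blast
  have f': "f = lc [(c, Some (Node (L 1) (L 2))), (-c, Some (Node (L 2) (L 1)))]"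
    unfolding f bracket_def var_lc mmul_lc lc_minus mscale_lc
    by (subst lc_eq_iff) (simp add: scl_def lc_def)
  show "f \<in> Prim 2"
    unfolding Prim2_char
  proof (intro conjI allI impI)
    fix w assume "f w \<noteq> 0"
    then have "w \<in> snd ` set [(c, Some (Node (L 1) (L 2))), (-c, Some (Node (L 2) (L 1)))]"
      unfolding f' by (rule lc_supp)
    then show "w \<in> set W2" by (auto simp: W2_def)
  next
    show "f (Some (Node (L 1) (L 2))) + f (Some (Node (L 2) (L 1))) = 0"
      unfolding f' by (simp add: lc_def)
  qed
qed

definition Aw :: "nat \<Rightarrow> nat \<Rightarrow> nat \<Rightarrow> 'a::field mag" where
  "Aw a b c = lc [(1, P a b c), (-1, Q a b c)]"
definition Kw :: "nat \<Rightarrow> nat \<Rightarrow> nat \<Rightarrow> 'a::field mag" where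
  "Kw a b c = lc [(1, P a b c), (-1, P b a c), (-1, Q c a b), (1, Q c b a)]"
definition Z1 :: "'a::field mag" where
  "Z1 = lc [(1,Q 1 2 3), (-1, Q 2 1 3), (-1, Q 3 1 2), (1, Q 3 2 1)]"
definition Z2 :: "'a::field mag" where
  "Z2 = lc [(1,Q 1 3 2), (-1, Q 3 1 2), (-1, Q 2 1 3), (1, Q 2 3 1)]"

lemma assoc_Aw: "assoc_b (var a) (var b) (var c) = Aw a b c"
  unfolding Aw_def assoc_b_def var_lc mmul_lc lc_minus
  by (simp add: scl_def)

lemma bracket_Kw: "bracket (bracket (var a) (var b)) (var c) = Kw a b c"
  unfolding Kw_def bracket_def var_lc mmul_lc lc_minus
  by (simp add: scl_def)

lemma Z1_eq: "Z1 = Kw 1 2 3 - Aw 1 2 3 + Aw 2 1 3"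
  unfolding Z1_def Kw_def Aw_def lc_minus lc_append[symmetric]
  by (subst lc_eq_iff) (simp add: scl_def lc_def)

lemma Z2_eq: "Z2 = Kw 1 3 2 - Aw 1 3 2 + Aw 3 1 2"
  unfolding Z2_def Kw_def Aw_def lc_minus lc_append[symmetric]
  by (subst lc_eq_iff) (simp add: scl_def lc_def)

definition perms6 :: "(nat \<times> nat \<times> nat) set" where "perms6 = {(1,2,3),(1,3,2),(2,1,3),(2,3,1),(3,1,2),(3,2,1)}"

lemma tri: "x \<in> {1,2,3} \<Longrightarrow> y \<in> {1,2,3} \<Longrightarrow> z \<in> {1,2,3} \<Longrightarrow> x\<noteq>y \<Longrightarrow> x\<noteq>z \<Longrightarrow> y\<noteq>z \<Longrightarrow> (x,y,z) \<in> perms6"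
  unfolding perms6_def by (simp only: insert_iff empty_iff) (elim disjE; simp)

lemma perm_vals:
  assumes "\<sigma> permutes {1,2,3::nat}"
  shows "(\<sigma> 1, \<sigma> 2, \<sigma> 3) \<in> perms6"
proof (rule tri)
  show "\<sigma> 1 \<in> {1,2,3}" "\<sigma> 2 \<in> {1,2,3}" "\<sigma> 3 \<in> {1,2,3}"
    by (simp_all only: permutes_in_image[OF assms]) (simp_all?)
  have i: "inj \<sigma>" by (rule permutes_inj[OF assms])
  show "\<sigma> 1 \<noteq> \<sigma> 2" "\<sigma> 1 \<noteq> \<sigma> 3" "\<sigma> 2 \<noteq> \<sigma> 3"
    by (simp_all only: inj_eq[OF i]) (simp_all?)
qed

lemma perm_exists:
  assumes "(a,b,c) \<in> perms6"
  shows "\<exists>\<sigma>. \<sigma> permutes {1,2,3::nat} \<and> \<sigma> 1 = a \<and> \<sigma> 2 = b \<and> \<sigma> 3 = c"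
proof -
  have t: "transpose x y permutes {1,2,3::nat}" if "x \<in> {1,2,3}" "y \<in> {1,2,3}" for x y
    using permutes_swap_id that by metis
  have i: "id permutes {1,2,3::nat}" by (rule permutes_id)
  have c1: "transpose 1 2 \<circ> transpose 2 3 permutes {1,2,3::nat}" by (rule permutes_compose; rule t; simp)
  have c2: "transpose 2 3 \<circ> transpose 1 2 permutes {1,2,3::nat}" by (rule permutes_compose; rule t; simp)
  have t12: "transpose 1 2 permutes {1,2,3::nat}" and t13: "transpose 1 3 permutes {1,2,3::nat}"
    and t23: "transpose 2 3 permutes {1,2,3::nat}" by (rule t; simp)+
  from assms show ?thesis unfolding perms6_def
    apply (simp only: insert_iff empty_iff)
    apply (elim disjE)
         apply (rule exI[of _ id]; use i in simp)
        apply (rule exI[of _ "transpose 2 3"]; use t23 in simp)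
       apply (rule exI[of _ "transpose 1 2"]; use t12 in simp)
      apply (rule exI[of _ "transpose 1 2 \<circ> transpose 2 3"]; use c1 in simp)
     apply (rule exI[of _ "transpose 2 3 \<circ> transpose 1 2"]; use c2 in simp)
    apply (rule exI[of _ "transpose 1 3"]; use t13 in simp)
    apply simp
    done
qed

lemma act_Aw: "\<sigma> permutes {1,2,3::nat} \<Longrightarrow> act \<sigma> (Aw 1 2 3) = Aw (\<sigma> 1) (\<sigma> 2) (\<sigma> 3)"
  unfolding Aw_def by (simp add: act_lc permutes_bij)

lemma act_Kw: "\<sigma> permutes {1,2,3::nat} \<Longrightarrow> act \<sigma> (Kw 1 2 3) = Kw (\<sigma> 1) (\<sigma> 2) (\<sigma> 3)"
  unfolding Kw_def by (simp add: act_lc permutes_bij)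

lemma Gset_eq:
  "({act \<sigma> (assoc_b (var 1) (var 2) (var 3)) | \<sigma>. \<sigma> permutes {1,2,3}} \<union>
    {act \<sigma> (bracket (bracket (var 1) (var 2)) (var 3)) | \<sigma>. \<sigma> permutes {1,2,3}} :: 'a::field mag set)
   = {Aw a b c | a b c. (a,b,c) \<in> perms6} \<union> {Kw a b c | a b c. (a,b,c) \<in> perms6}"
  unfolding assoc_Aw bracket_Kw
proof (intro set_eqI iffI)
  fix g :: "'a mag"
  assume "g \<in> {act \<sigma> (Aw 1 2 3) | \<sigma>. \<sigma> permutes {1,2,3}} \<union> {act \<sigma> (Kw 1 2 3) | \<sigma>. \<sigma> permutes {1,2,3}}"
  then show "g \<in> {Aw a b c | a b c. (a,b,c) \<in> perms6} \<union> {Kw a b c | a b c. (a,b,c) \<in> perms6}"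
  proof (elim UnE CollectE exE conjE)
    fix \<sigma> assume g: "g = act \<sigma> (Aw 1 2 3)" and s: "\<sigma> permutes {1,2,3}"
    have "g = Aw (\<sigma> 1) (\<sigma> 2) (\<sigma> 3)" using g act_Aw[OF s] by simp
    then show ?thesis using perm_vals[OF s] by blast
  next
    fix \<sigma> assume g: "g = act \<sigma> (Kw 1 2 3)" and s: "\<sigma> permutes {1,2,3}"
    have "g = Kw (\<sigma> 1) (\<sigma> 2) (\<sigma> 3)" using g act_Kw[OF s] by simp
    then show ?thesis using perm_vals[OF s] by blast
  qed
next
  fix g :: "'a mag"
  assume "g \<in> {Aw a b c | a b c. (a,b,c) \<in> perms6} \<union> {Kw a b c | a b c. (a,b,c) \<in> perms6}"
  then show "g \<in> {act \<sigma> (Aw 1 2 3) | \<sigma>. \<sigma> permutes {1,2,3}} \<union> {act \<sigma> (Kw 1 2 3) | \<sigma>. \<sigma> permutes {1,2,3}}"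
  proof (elim UnE CollectE exE conjE)
    fix a b c assume g: "g = Aw a b c" and m: "(a,b,c) \<in> perms6"
    obtain \<sigma> where s: "\<sigma> permutes {1,2,3}" "\<sigma> 1 = a" "\<sigma> 2 = b" "\<sigma> 3 = c" using perm_exists[OF m] by blast
    have e: "act \<sigma> (Aw 1 2 3) = Aw a b c" using act_Aw[OF s(1)] s(2-4) by simp
    have "g = act \<sigma> (Aw 1 2 3)" by (simp only: g e)
    then show ?thesis using s(1) by blast
  next
    fix a b c assume g: "g = Kw a b c" and m: "(a,b,c) \<in> perms6"
    obtain \<sigma> where s: "\<sigma> permutes {1,2,3}" "\<sigma> 1 = a" "\<sigma> 2 = b" "\<sigma> 3 = c" using perm_exists[OF m] by blast
    have e: "act \<sigma> (Kw 1 2 3) = Kw a b c" using act_Kw[OF s(1)] s(2-4) by simp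
    have "g = act \<sigma> (Kw 1 2 3)" by (simp only: g e)
    then show ?thesis using s(1) by blast
  qed
qed

lemma subspace_Prim3: "MV.subspace (Prim 3 :: 'a::field mag set)"
proof (rule MV.subspaceI)
  show "0 \<in> (Prim 3 :: 'a mag set)" unfolding Prim3_char by (simp add: EQS_def con3_def)
next
  fix f g :: "'a mag" assume f: "f \<in> Prim 3" and g: "g \<in> Prim 3"
  have "\<forall>w. (f + g) w \<noteq> 0 \<longrightarrow> w \<in> set W3"
  proof (intro allI impI)
    fix w assume "(f + g) w \<noteq> 0"
    then have "f w \<noteq> 0 \<or> g w \<noteq> 0" by auto
    then show "w \<in> set W3" using f g unfolding Prim3_char by blast
  qed
  moreover have "EQS (f + g)"
  proof -
    have "EQS f" "EQS g" using f g unfolding Prim3_char by blast+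
    then show ?thesis unfolding EQS_def con3_def plus_fun_apply
      by (metis (no_types, lifting) add.assoc add.commute add.left_commute add_0)
  qed
  ultimately show "f + g \<in> Prim 3" unfolding Prim3_char by blast
next
  fix c and f :: "'a mag" assume f: "f \<in> Prim 3"
  have "\<forall>w. mscale c f w \<noteq> 0 \<longrightarrow> w \<in> set W3" using f unfolding Prim3_char mscale_def by auto
  moreover have "EQS (mscale c f)"
  proof -
    have "EQS f" using f unfolding Prim3_char by blast
    then show ?thesis unfolding EQS_def con3_def mscale_def
      by (simp add: distrib_left[symmetric])
  qed
  ultimately show "mscale c f \<in> Prim 3" unfolding Prim3_char by blast
qed

lemma lc_Prim3:
  assumes "\<And>w. w \<in> snd ` set xs \<Longrightarrow> w \<in> set W3" "EQS (lc xs)"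
  shows "lc xs \<in> Prim 3"
proof -
  have "\<forall>w. lc xs w \<noteq> 0 \<longrightarrow> w \<in> set W3"
  proof (intro allI impI)
    fix w assume "lc xs w \<noteq> 0"
    then have "w \<in> snd ` set xs" by (rule lc_supp)
    then show "w \<in> set W3" by (rule assms(1))
  qed
  then show ?thesis unfolding Prim3_char using assms(2) by simp
qed

lemma Aw_Prim3_0: "Aw 1 2 3 \<in> Prim 3"
  unfolding Aw_def by (rule lc_Prim3) (auto simp: W3_def EQS_def con3_def lc_def)
lemma Aw_Prim3_1: "Aw 1 3 2 \<in> Prim 3"
  unfolding Aw_def by (rule lc_Prim3) (auto simp: W3_def EQS_def con3_def lc_def)
lemma Aw_Prim3_2: "Aw 2 1 3 \<in> Prim 3"
  unfolding Aw_def by (rule lc_Prim3) (auto simp: W3_def EQS_def con3_def lc_def)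
lemma Aw_Prim3_3: "Aw 2 3 1 \<in> Prim 3"
  unfolding Aw_def by (rule lc_Prim3) (auto simp: W3_def EQS_def con3_def lc_def)
lemma Aw_Prim3_4: "Aw 3 1 2 \<in> Prim 3"
  unfolding Aw_def by (rule lc_Prim3) (auto simp: W3_def EQS_def con3_def lc_def)
lemma Aw_Prim3_5: "Aw 3 2 1 \<in> Prim 3"
  unfolding Aw_def by (rule lc_Prim3) (auto simp: W3_def EQS_def con3_def lc_def)
lemma Kw_Prim3_0: "Kw 1 2 3 \<in> Prim 3"
  unfolding Kw_def by (rule lc_Prim3) (auto simp: W3_def EQS_def con3_def lc_def)
lemma Kw_Prim3_1: "Kw 1 3 2 \<in> Prim 3"
  unfolding Kw_def by (rule lc_Prim3) (auto simp: W3_def EQS_def con3_def lc_def)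
lemma Kw_Prim3_2: "Kw 2 1 3 \<in> Prim 3"
  unfolding Kw_def by (rule lc_Prim3) (auto simp: W3_def EQS_def con3_def lc_def)
lemma Kw_Prim3_3: "Kw 2 3 1 \<in> Prim 3"
  unfolding Kw_def by (rule lc_Prim3) (auto simp: W3_def EQS_def con3_def lc_def)
lemma Kw_Prim3_4: "Kw 3 1 2 \<in> Prim 3"
  unfolding Kw_def by (rule lc_Prim3) (auto simp: W3_def EQS_def con3_def lc_def)
lemma Kw_Prim3_5: "Kw 3 2 1 \<in> Prim 3"
  unfolding Kw_def by (rule lc_Prim3) (auto simp: W3_def EQS_def con3_def lc_def)

lemma Aw_Prim3: "(a,b,c) \<in> perms6 \<Longrightarrow> Aw a b c \<in> Prim 3"
  unfolding perms6_def using Aw_Prim3_0 Aw_Prim3_1 Aw_Prim3_2 Aw_Prim3_3 Aw_Prim3_4 Aw_Prim3_5 by auto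
lemma Kw_Prim3: "(a,b,c) \<in> perms6 \<Longrightarrow> Kw a b c \<in> Prim 3"
  unfolding perms6_def using Kw_Prim3_0 Kw_Prim3_1 Kw_Prim3_2 Kw_Prim3_3 Kw_Prim3_4 Kw_Prim3_5 by auto

lemma dq:
  assumes "f \<in> Prim 3"
  shows "f (Q 1 2 3) = f (P 3 2 1) + f (Q 3 2 1) - f (P 1 2 3)"
    "f (Q 1 3 2) = - (f (P 3 1 2) + f (Q 3 1 2)) - (f (P 3 2 1) + f (Q 3 2 1)) - f (P 1 3 2)"
    "f (Q 2 1 3) = f (P 3 1 2) + f (Q 3 1 2) - f (P 2 1 3)"
    "f (Q 2 3 1) = - (f (P 3 1 2) + f (Q 3 1 2)) - (f (P 3 2 1) + f (Q 3 2 1)) - f (P 2 3 1)"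
proof -
  have "EQS f" using assms unfolding Prim3_char by blast
  then have h: "con3 f 1 2 3" "con3 f 1 3 2" "con3 f 2 1 3" "con3 f 2 3 1" "con3 f 3 1 2" "con3 f 3 2 1"
    unfolding EQS_def by blast+
  note h' = h[unfolded con3_def]
  show "f (Q 1 2 3) = f (P 3 2 1) + f (Q 3 2 1) - f (P 1 2 3)" using h'(2) h'(5) by algebra
  show "f (Q 1 3 2) = - (f (P 3 1 2) + f (Q 3 1 2)) - (f (P 3 2 1) + f (Q 3 2 1)) - f (P 1 3 2)" using h'(2) by algebra
  show "f (Q 2 1 3) = f (P 3 1 2) + f (Q 3 1 2) - f (P 2 1 3)" using h'(3) h'(5) by algebra
  show "f (Q 2 3 1) = - (f (P 3 1 2) + f (Q 3 1 2)) - (f (P 3 2 1) + f (Q 3 2 1)) - f (P 2 3 1)" using h'(1) h'(2) h'(3) by algebra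
qed

definition dec :: "'a::field mag \<Rightarrow> 'a mag" where
  "dec f = mscale (f (P 1 2 3)) (Aw 1 2 3) + mscale (f (P 1 3 2)) (Aw 1 3 2) + mscale (f (P 2 1 3)) (Aw 2 1 3)
         + mscale (f (P 2 3 1)) (Aw 2 3 1) + mscale (f (P 3 1 2)) (Aw 3 1 2) + mscale (f (P 3 2 1)) (Aw 3 2 1)
         + mscale (f (P 3 2 1) + f (Q 3 2 1)) Z1
         + mscale (- (f (P 3 1 2) + f (Q 3 1 2)) - (f (P 3 2 1) + f (Q 3 2 1))) Z2"

lemma decomp:
  assumes f: "f \<in> Prim 3"
  shows "f = dec f"
proof -
  have s: "\<And>w. f w \<noteq> 0 \<Longrightarrow> w \<in> set W3" using f unfolding Prim3_char by blast
  have fe: "f = lc (map (\<lambda>w. (f w, w)) W3)" by (rule lc_W[OF W3_facts(1) s])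
  note d = dq[OF f]
  have "lc (map (\<lambda>w. (f w, w)) W3) = dec f"
    unfolding dec_def Aw_def Z1_def Z2_def mscale_lc lc_append[symmetric]
    apply (subst lc_eq_iff)
    using d by (simp add: lc_def scl_def W3_def algebra_simps)
  then show ?thesis using fe by simp
qed


lemma Z1_Prim3: "Z1 \<in> Prim 3"
  unfolding Z1_def by (rule lc_Prim3) (auto simp: W3_def EQS_def con3_def lc_def)
lemma Z2_Prim3: "Z2 \<in> Prim 3"
  unfolding Z2_def by (rule lc_Prim3) (auto simp: W3_def EQS_def con3_def lc_def)

lemma dec_in_span:
  assumes "Aw 1 2 3 \<in> MV.span S" "Aw 1 3 2 \<in> MV.span S" "Aw 2 1 3 \<in> MV.span S"
    "Aw 2 3 1 \<in> MV.span S" "Aw 3 1 2 \<in> MV.span S" "Aw 3 2 1 \<in> MV.span S"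
    "Z1 \<in> MV.span S" "Z2 \<in> MV.span S"
  shows "dec f \<in> MV.span S"
  unfolding dec_def
  apply (rule MV.span_add)+
  apply (rule MV.span_scale, rule assms)+
  done

definition "Gs = ({Aw a b c | a b c. (a,b,c) \<in> perms6} \<union> {Kw a b c | a b c. (a,b,c) \<in> perms6} :: 'a::field mag set)"

lemma Gs_Prim3: "Gs \<subseteq> Prim 3"
  unfolding Gs_def using Aw_Prim3 Kw_Prim3 by blast

lemma Prim3_span_Gs: "MV.span (Gs :: 'a::field mag set) = Prim 3"
proof -
  have A: "(a,b,c) \<in> perms6 \<Longrightarrow> Aw a b c \<in> MV.span Gs" for a b c
    by (rule MV.span_base, auto simp: Gs_def)
  have K: "(a,b,c) \<in> perms6 \<Longrightarrow> Kw a b c \<in> MV.span Gs" for a b c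
    by (rule MV.span_base, auto simp: Gs_def)
  have p: "(1,2,3) \<in> perms6" "(1,3,2) \<in> perms6" "(2,1,3) \<in> perms6" "(2,3,1) \<in> perms6" "(3,1,2) \<in> perms6" "(3,2,1) \<in> perms6"
    by (simp_all add: perms6_def)
  have z1: "Z1 \<in> MV.span Gs" unfolding Z1_eq
    by (rule MV.span_add[OF MV.span_diff[OF K[OF p(1)] A[OF p(1)]] A[OF p(3)]])
  have z2: "Z2 \<in> MV.span Gs" unfolding Z2_eq
    by (rule MV.span_add[OF MV.span_diff[OF K[OF p(2)] A[OF p(2)]] A[OF p(5)]])
  have sub: "Prim 3 \<subseteq> MV.span (Gs :: 'a mag set)"
  proof
    fix f :: "'a mag" assume f: "f \<in> Prim 3"
    have "dec f \<in> MV.span (Gs :: 'a mag set)" by (rule dec_in_span[OF A[OF p(1)] A[OF p(2)] A[OF p(3)] A[OF p(4)] A[OF p(5)] A[OF p(6)] z1 z2])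
    then show "f \<in> MV.span (Gs :: 'a mag set)" using decomp[OF f] by simp
  qed
  show ?thesis by (rule MV.span_subspace[OF Gs_Prim3 sub subspace_Prim3])
qed

definition "B8 = [Aw 1 2 3, Aw 1 3 2, Aw 2 1 3, Aw 2 3 1, Aw 3 1 2, Aw 3 2 1, Z1, Z2]"

lemma B8_distinct: "distinct (B8 :: 'a::field mag list)"
proof -
  have "distinct (map (\<lambda>v. map v W3) (B8 :: 'a mag list))"
    by (simp add: B8_def Aw_def Z1_def Z2_def lc_def W3_def)
  then show ?thesis by (simp add: distinct_map)
qed

lemma B8_indep: "MV.independent (set (B8 :: 'a::field mag list))"
proof (rule MV.independent_if_scalars_zero)
  show "finite (set B8)" by simp
next
  fix c :: "'a mag \<Rightarrow> 'a" and v :: "'a mag"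
  assume h: "(\<Sum>v\<in>set B8. mscale (c v) v) = 0" and v: "v \<in> set B8"
  have h2: "sum_list (map (\<lambda>v. mscale (c v) v) B8) = 0"
    using h sum_list_distinct_conv_sum_set[OF B8_distinct, of "\<lambda>v. mscale (c v) v"] by simp
  have ev: "sum_list (map (\<lambda>v. mscale (c v) v) B8) w = 0" for w using h2 by simp
  have e: "c (Aw 1 2 3) = 0" "c (Aw 1 3 2) = 0" "c (Aw 2 1 3) = 0" "c (Aw 2 3 1) = 0" "c (Aw 3 1 2) = 0" "c (Aw 3 2 1) = 0"
    using ev[of "P 1 2 3"] ev[of "P 1 3 2"] ev[of "P 2 1 3"] ev[of "P 2 3 1"] ev[of "P 3 1 2"] ev[of "P 3 2 1"]
    by (simp_all add: B8_def mscale_def Aw_def Z1_def Z2_def lc_def)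
  then have e2: "c Z1 = 0" "c Z2 = 0"
    using ev[of "Q 1 2 3"] ev[of "Q 1 3 2"]
    by (simp_all add: B8_def mscale_def Aw_def Z1_def Z2_def lc_def)
  show "c v = 0" using v e e2 by (auto simp: B8_def)
qed

lemma dim_Prim3: "MV.dim (Prim 3 :: 'a::field mag set) = 8"
proof (rule MV.dim_unique[of "set B8"])
  show "set B8 \<subseteq> (Prim 3 :: 'a mag set)"
    using Aw_Prim3_0 Aw_Prim3_1 Aw_Prim3_2 Aw_Prim3_3 Aw_Prim3_4 Aw_Prim3_5 Z1_Prim3 Z2_Prim3
    by (simp add: B8_def)
  show "Prim 3 \<subseteq> MV.span (set (B8 :: 'a mag list))"
  proof
    fix f :: "'a mag" assume f: "f \<in> Prim 3"
    have "dec f \<in> MV.span (set (B8 :: 'a mag list))"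
      by (rule dec_in_span; rule MV.span_base; simp add: B8_def)
    then show "f \<in> MV.span (set B8)" using decomp[OF f] by simp
  qed
  show "MV.independent (set (B8 :: 'a mag list))" by (rule B8_indep)
  show "card (set (B8 :: 'a mag list)) = 8" unfolding distinct_card[OF B8_distinct] by (simp add: B8_def)
qed

definition Tt :: "'a::field mag \<Rightarrow> 'a" where
  "Tt f = f (P 1 2 3) + f (P 1 3 2) + f (P 2 1 3) + f (P 2 3 1) + f (P 3 1 2) + f (P 3 2 1)"

definition U1 :: "'a::field mag \<Rightarrow> nat \<Rightarrow> 'a" where
  "U1 f = (\<lambda>i. if i = 1 then 3 * (f (P 1 2 3) + f (P 1 3 2)) - Tt f
     else if i = 2 then 3 * (f (P 2 1 3) + f (P 2 3 1)) - Tt f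
     else if i = 3 then 3 * (f (P 3 1 2) + f (P 3 2 1)) - Tt f else 0)"

definition U2 :: "'a::field mag \<Rightarrow> nat \<Rightarrow> 'a" where
  "U2 f = (\<lambda>i. if i = 1 then 3 * (f (P 2 1 3) + f (P 3 1 2)) - Tt f
     else if i = 2 then 3 * (f (P 1 2 3) + f (P 3 2 1)) - Tt f
     else if i = 3 then 3 * (f (P 1 3 2) + f (P 2 3 1)) - Tt f else 0)"

definition U3 :: "'a::field mag \<Rightarrow> nat \<Rightarrow> 'a" where
  "U3 f = (\<lambda>i. if i = 1 then f (P 1 2 3) + f (Q 1 2 3) + f (P 1 3 2) + f (Q 1 3 2)
     else if i = 2 then f (P 2 1 3) + f (Q 2 1 3) + f (P 2 3 1) + f (Q 2 3 1)
     else if i = 3 then f (P 3 1 2) + f (Q 3 1 2) + f (P 3 2 1) + f (Q 3 2 1) else 0)"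

definition SG :: "'a::field mag \<Rightarrow> 'a" where
  "SG f = f (P 1 2 3) - f (P 1 3 2) - f (P 2 1 3) + f (P 2 3 1) + f (P 3 1 2) - f (P 3 2 1)"

definition phi :: "'a::field mag \<Rightarrow> 'a target" where
  "phi f = (Tt f, U1 f, U2 f, U3 f, SG f)"

definition psi0 :: "'a::field \<Rightarrow> (nat \<Rightarrow> 'a) \<Rightarrow> (nat \<Rightarrow> 'a) \<Rightarrow> (nat \<Rightarrow> 'a) \<Rightarrow> 'a \<Rightarrow> 'a mag" where
  "psi0 T u1 u2 u3 sg = (let a = u1 1; b = u1 2; c = u2 1; d = u2 2; x = u3 1; y = u3 2;
     p123 = (3*T+4*a+2*b+2*c+4*d+3*sg)/18; p132 = (3*T+2*a-2*b-2*c-4*d-3*sg)/18;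
     p213 = (3*T+2*a+4*b+4*c+2*d-3*sg)/18; p231 = (3*T-2*a+2*b-4*c-2*d+3*sg)/18;
     p312 = (3*T-2*a-4*b+2*c-2*d+3*sg)/18; p321 = (3*T-4*a-2*b-2*c+2*d-3*sg)/18
   in lc [(p123, P 1 2 3), (p132, P 1 3 2), (p213, P 2 1 3), (p231, P 2 3 1), (p312, P 3 1 2), (p321, P 3 2 1),
          (-y - p123, Q 1 2 3), (x + y - p132, Q 1 3 2), (-x - p213, Q 2 1 3), (x + y - p231, Q 2 3 1),
          (-x - p312, Q 3 1 2), (-y - p321, Q 3 2 1)])"

definition psi :: "'a::field target \<Rightarrow> 'a mag" where
  "psi t = (case t of (T, u1, u2, u3, sg) \<Rightarrow> psi0 T u1 u2 u3 sg)"

lemma phi_add: "phi (f + g) = tadd (phi f) (phi g)"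
  by (simp add: phi_def tadd_def Tt_def U1_def U2_def U3_def SG_def fun_eq_iff algebra_simps)

lemma phi_scale: "phi (mscale c f) = tscale c (phi f)"
  by (simp add: phi_def tscale_def mscale_def Tt_def U1_def U2_def U3_def SG_def fun_eq_iff algebra_simps)

lemma phi_Target:
  assumes f: "(f::'a::field_char_0 mag) \<in> Prim 3"
  shows "phi f \<in> Target"
proof -
  note d = dq[OF f]
  show ?thesis unfolding phi_def Target_def V21_def
    using d by (simp add: U1_def U2_def U3_def Tt_def)
qed

lemma psi_phi:
  assumes f: "(f::'a::field_char_0 mag) \<in> Prim 3"
  shows "psi (phi f) = f"
proof -
  have s: "\<And>w. f w \<noteq> 0 \<Longrightarrow> w \<in> set W3" using f unfolding Prim3_char by blast
  have fe: "f = lc (map (\<lambda>w. (f w, w)) W3)" by (rule lc_W[OF W3_facts(1) s])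
  note d = dq[OF f]
  have "psi (phi f) = lc (map (\<lambda>w. (f w, w)) W3)"
    unfolding psi_def phi_def psi0_def Let_def
    apply (simp only: prod.case)
    apply (subst lc_eq_iff)
    using d by (simp add: lc_def W3_def U1_def U2_def U3_def Tt_def SG_def)
  then show ?thesis using fe by simp
qed


lemma V21_D: "u \<in> V21 \<Longrightarrow> u 3 = - u 1 - u 2"
  unfolding V21_def by (auto simp: algebra_simps eq_neg_iff_add_eq_0)
lemma V21_O: "u \<in> V21 \<Longrightarrow> i \<noteq> 1 \<Longrightarrow> i \<noteq> 2 \<Longrightarrow> i \<noteq> 3 \<Longrightarrow> u i = 0"
  unfolding V21_def by auto

lemma psi_Prim3:
  assumes t: "(t :: 'a::field_char_0 target) \<in> Target"
  shows "psi t \<in> Prim 3"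
proof -
  obtain T u1 u2 u3 sg where tt: "t = (T, u1, u2, u3, sg)" by (cases t) auto
  show ?thesis unfolding tt psi_def psi0_def Let_def prod.case
    by (rule lc_Prim3) (auto simp: W3_def EQS_def con3_def lc_def field_simps)
qed

lemma phi_psi:
  assumes t: "(t :: 'a::field_char_0 target) \<in> Target"
  shows "phi (psi t) = t"
proof -
  obtain T u1 u2 u3 sg where tt: "t = (T, u1, u2, u3, sg)" by (cases t) auto
  have v: "u1 \<in> V21" "u2 \<in> V21" "u3 \<in> V21" using t unfolding tt Target_def by auto
  note e = V21_D[OF v(1)] V21_D[OF v(2)] V21_D[OF v(3)] and o = V21_O[OF v(1)] V21_O[OF v(2)] V21_O[OF v(3)]
  have ev: "psi0 T u1 u2 u3 sg w = (let a = u1 1; b = u1 2; c = u2 1; d = u2 2; x = u3 1; y = u3 2;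
     p123 = (3*T+4*a+2*b+2*c+4*d+3*sg)/18; p132 = (3*T+2*a-2*b-2*c-4*d-3*sg)/18;
     p213 = (3*T+2*a+4*b+4*c+2*d-3*sg)/18; p231 = (3*T-2*a+2*b-4*c-2*d+3*sg)/18;
     p312 = (3*T-2*a-4*b+2*c-2*d+3*sg)/18; p321 = (3*T-4*a-2*b-2*c+2*d-3*sg)/18
   in lc [(p123, P 1 2 3), (p132, P 1 3 2), (p213, P 2 1 3), (p231, P 2 3 1), (p312, P 3 1 2), (p321, P 3 2 1),
          (-y - p123, Q 1 2 3), (x + y - p132, Q 1 3 2), (-x - p213, Q 2 1 3), (x + y - p231, Q 2 3 1),
          (-x - p312, Q 3 1 2), (-y - p321, Q 3 2 1)] w)" for w
    unfolding psi0_def Let_def by simp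
  have "Tt (psi0 T u1 u2 u3 sg) = T"
    unfolding Tt_def ev Let_def by (simp add: lc_def field_simps)
  moreover have "U1 (psi0 T u1 u2 u3 sg) = u1"
  proof
    fix i show "U1 (psi0 T u1 u2 u3 sg) i = u1 i"
      unfolding U1_def Tt_def ev Let_def
      by (cases "i = 1"; cases "i = 2"; cases "i = 3") (simp_all add: lc_def field_simps e o)
  qed
  moreover have "U2 (psi0 T u1 u2 u3 sg) = u2"
  proof
    fix i show "U2 (psi0 T u1 u2 u3 sg) i = u2 i"
      unfolding U2_def Tt_def ev Let_def
      by (cases "i = 1"; cases "i = 2"; cases "i = 3") (simp_all add: lc_def field_simps e o)
  qed
  moreover have "U3 (psi0 T u1 u2 u3 sg) = u3"
  proof
    fix i show "U3 (psi0 T u1 u2 u3 sg) i = u3 i"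
      unfolding U3_def ev Let_def
      by (cases "i = 1"; cases "i = 2"; cases "i = 3") (simp_all add: lc_def field_simps e o)
  qed
  moreover have "SG (psi0 T u1 u2 u3 sg) = sg"
    unfolding SG_def ev Let_def by (simp add: lc_def field_simps)
  ultimately show ?thesis unfolding tt psi_def phi_def by simp
qed


lemma perm_eqI:
  assumes "\<tau> permutes {1,2,3::nat}" "\<tau> 1 = g 1" "\<tau> 2 = g 2" "\<tau> 3 = g 3" "\<And>x. x \<notin> {1,2,3} \<Longrightarrow> g x = x"
  shows "\<tau> = g"
proof
  fix x
  show "\<tau> x = g x"
  proof (cases "x \<in> {1,2,3}")
    case True then show ?thesis using assms(2-4) by auto
  next
    case False then show ?thesis using assms(5) permutes_not_in[OF assms(1)] by metis
  qed
qed

lemma tau_cases: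
  assumes t: "\<tau> permutes {1,2,3::nat}"
  shows "(\<tau> 1 = 1 \<and> \<tau> 2 = 2 \<and> \<tau> 3 = 3 \<and> sign \<tau> = 1) \<or> (\<tau> 1 = 1 \<and> \<tau> 2 = 3 \<and> \<tau> 3 = 2 \<and> sign \<tau> = -1)
    \<or> (\<tau> 1 = 2 \<and> \<tau> 2 = 1 \<and> \<tau> 3 = 3 \<and> sign \<tau> = -1) \<or> (\<tau> 1 = 2 \<and> \<tau> 2 = 3 \<and> \<tau> 3 = 1 \<and> sign \<tau> = 1)
    \<or> (\<tau> 1 = 3 \<and> \<tau> 2 = 1 \<and> \<tau> 3 = 2 \<and> sign \<tau> = 1) \<or> (\<tau> 1 = 3 \<and> \<tau> 2 = 2 \<and> \<tau> 3 = 1 \<and> sign \<tau> = -1)"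
proof -
  have ts: "sign (transpose a b) = -1" if "a \<noteq> b" for a b :: nat using that by (simp add: sign_swap_id)
  have tc: "sign (transpose a b \<circ> transpose c d) = 1" if "a \<noteq> b" "c \<noteq> d" for a b c d :: nat
    using that by (simp add: sign_compose permutation_swap_id sign_swap_id)
  have o: "\<And>x::nat. x \<notin> {1,2,3} \<Longrightarrow> transpose a b x = x" if "a \<in> {1,2,3}" "b \<in> {1,2,3}" for a b
    using that by (auto simp: transpose_def)
  have oc: "\<And>x::nat. x \<notin> {1,2,3} \<Longrightarrow> (transpose a b \<circ> transpose c d) x = x" if "a \<in> {1,2,3}" "b \<in> {1,2,3}" "c \<in> {1,2,3}" "d \<in> {1,2,3}" for a b c d
    using that by (auto simp: transpose_def)
  from perm_vals[OF t] show ?thesis unfolding perms6_def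
  proof (simp only: insert_iff empty_iff prod.inject, elim disjE conjE)
    assume "\<tau> 1 = 1" "\<tau> 2 = 2" "\<tau> 3 = 3"
    moreover have "\<tau> = id" by (rule perm_eqI[OF t]) (use calculation in simp_all)
    ultimately show ?thesis by simp
  next
    assume "\<tau> 1 = 1" "\<tau> 2 = 3" "\<tau> 3 = 2"
    moreover have "\<tau> = transpose 2 3" by (rule perm_eqI[OF t]) (use calculation o in simp_all)
    ultimately show ?thesis using ts[of 2 3] by simp
  next
    assume "\<tau> 1 = 2" "\<tau> 2 = 1" "\<tau> 3 = 3"
    moreover have "\<tau> = transpose 1 2" by (rule perm_eqI[OF t]) (use calculation o in simp_all)
    ultimately show ?thesis using ts[of 1 2] by simp
  next
    assume "\<tau> 1 = 2" "\<tau> 2 = 3" "\<tau> 3 = 1"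
    moreover have "\<tau> = transpose 1 2 \<circ> transpose 2 3" by (rule perm_eqI[OF t]) (use calculation oc in simp_all)
    ultimately show ?thesis using tc[of 1 2 2 3] by simp
  next
    assume "\<tau> 1 = 3" "\<tau> 2 = 1" "\<tau> 3 = 2"
    moreover have "\<tau> = transpose 2 3 \<circ> transpose 1 2" by (rule perm_eqI[OF t]) (use calculation oc in simp_all)
    ultimately show ?thesis using tc[of 2 3 1 2] by simp
  next
    assume "\<tau> 1 = 3" "\<tau> 2 = 2" "\<tau> 3 = 1"
    moreover have "\<tau> = transpose 1 3" by (rule perm_eqI[OF t]) (use calculation o in simp_all)
    ultimately show ?thesis using ts[of 1 3] by simp
  next
    assume False then show ?thesis by simp
  qed
qed

lemma fun_ext3:
  assumes "\<And>i. i = 1 \<Longrightarrow> F i = G i" "\<And>i. i = 2 \<Longrightarrow> F i = G i" "\<And>i. i = 3 \<Longrightarrow> F i = G i"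
    "\<And>i. i \<notin> {1,2,3::nat} \<Longrightarrow> F i = G i"
  shows "F = G"
proof
  fix i show "F i = G i" using assms by (cases "i \<in> {1,2,3}") auto
qed

lemma equiv_case_0:
  fixes f :: "'a::field mag"
  assumes out: "\<And>i. i \<notin> {1,2,3} \<Longrightarrow> \<tau> i = i"
  and h: "\<tau> 1 = 1" "\<tau> 2 = 2" "\<tau> 3 = 3" "sign \<tau> = 1"
  and a: "\<And>a b c. g (P a b c) = f (P (\<tau> a) (\<tau> b) (\<tau> c))"
          "\<And>a b c. g (Q a b c) = f (Q (\<tau> a) (\<tau> b) (\<tau> c))"
  shows "phi g = (Tt f, (\<lambda>i. U1 f (\<tau> i)), (\<lambda>i. U2 f (\<tau> i)), (\<lambda>i. U3 f (\<tau> i)), of_int (sign \<tau>) * SG f)"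
  unfolding phi_def prod.inject
proof (intro conjI)
  show "Tt g = Tt f" using h by (simp add: Tt_def a algebra_simps)
  show "U1 g = (\<lambda>i. U1 f (\<tau> i))" by (rule fun_ext3) (use h out in \<open>simp_all add: Tt_def U1_def a algebra_simps\<close>)
  show "U2 g = (\<lambda>i. U2 f (\<tau> i))" by (rule fun_ext3) (use h out in \<open>simp_all add: Tt_def U2_def a algebra_simps\<close>)
  show "U3 g = (\<lambda>i. U3 f (\<tau> i))" by (rule fun_ext3) (use h out in \<open>simp_all add: U3_def a algebra_simps\<close>)
  show "SG g = of_int (sign \<tau>) * SG f" using h by (simp add: SG_def a algebra_simps)
qed

lemma equiv_case_1:
  fixes f :: "'a::field mag"
  assumes out: "\<And>i. i \<notin> {1,2,3} \<Longrightarrow> \<tau> i = i"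
  and h: "\<tau> 1 = 1" "\<tau> 2 = 3" "\<tau> 3 = 2" "sign \<tau> = -1"
  and a: "\<And>a b c. g (P a b c) = f (P (\<tau> a) (\<tau> b) (\<tau> c))"
          "\<And>a b c. g (Q a b c) = f (Q (\<tau> a) (\<tau> b) (\<tau> c))"
  shows "phi g = (Tt f, (\<lambda>i. U1 f (\<tau> i)), (\<lambda>i. U2 f (\<tau> i)), (\<lambda>i. U3 f (\<tau> i)), of_int (sign \<tau>) * SG f)"
  unfolding phi_def prod.inject
proof (intro conjI)
  show "Tt g = Tt f" using h by (simp add: Tt_def a algebra_simps)
  show "U1 g = (\<lambda>i. U1 f (\<tau> i))" by (rule fun_ext3) (use h out in \<open>simp_all add: Tt_def U1_def a algebra_simps\<close>)
  show "U2 g = (\<lambda>i. U2 f (\<tau> i))" by (rule fun_ext3) (use h out in \<open>simp_all add: Tt_def U2_def a algebra_simps\<close>)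
  show "U3 g = (\<lambda>i. U3 f (\<tau> i))" by (rule fun_ext3) (use h out in \<open>simp_all add: U3_def a algebra_simps\<close>)
  show "SG g = of_int (sign \<tau>) * SG f" using h by (simp add: SG_def a algebra_simps)
qed

lemma equiv_case_2:
  fixes f :: "'a::field mag"
  assumes out: "\<And>i. i \<notin> {1,2,3} \<Longrightarrow> \<tau> i = i"
  and h: "\<tau> 1 = 2" "\<tau> 2 = 1" "\<tau> 3 = 3" "sign \<tau> = -1"
  and a: "\<And>a b c. g (P a b c) = f (P (\<tau> a) (\<tau> b) (\<tau> c))"
          "\<And>a b c. g (Q a b c) = f (Q (\<tau> a) (\<tau> b) (\<tau> c))"
  shows "phi g = (Tt f, (\<lambda>i. U1 f (\<tau> i)), (\<lambda>i. U2 f (\<tau> i)), (\<lambda>i. U3 f (\<tau> i)), of_int (sign \<tau>) * SG f)"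
  unfolding phi_def prod.inject
proof (intro conjI)
  show "Tt g = Tt f" using h by (simp add: Tt_def a algebra_simps)
  show "U1 g = (\<lambda>i. U1 f (\<tau> i))" by (rule fun_ext3) (use h out in \<open>simp_all add: Tt_def U1_def a algebra_simps\<close>)
  show "U2 g = (\<lambda>i. U2 f (\<tau> i))" by (rule fun_ext3) (use h out in \<open>simp_all add: Tt_def U2_def a algebra_simps\<close>)
  show "U3 g = (\<lambda>i. U3 f (\<tau> i))" by (rule fun_ext3) (use h out in \<open>simp_all add: U3_def a algebra_simps\<close>)
  show "SG g = of_int (sign \<tau>) * SG f" using h by (simp add: SG_def a algebra_simps)
qed

lemma equiv_case_3:
  fixes f :: "'a::field mag"
  assumes out: "\<And>i. i \<notin> {1,2,3} \<Longrightarrow> \<tau> i = i"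
  and h: "\<tau> 1 = 2" "\<tau> 2 = 3" "\<tau> 3 = 1" "sign \<tau> = 1"
  and a: "\<And>a b c. g (P a b c) = f (P (\<tau> a) (\<tau> b) (\<tau> c))"
          "\<And>a b c. g (Q a b c) = f (Q (\<tau> a) (\<tau> b) (\<tau> c))"
  shows "phi g = (Tt f, (\<lambda>i. U1 f (\<tau> i)), (\<lambda>i. U2 f (\<tau> i)), (\<lambda>i. U3 f (\<tau> i)), of_int (sign \<tau>) * SG f)"
  unfolding phi_def prod.inject
proof (intro conjI)
  show "Tt g = Tt f" using h by (simp add: Tt_def a algebra_simps)
  show "U1 g = (\<lambda>i. U1 f (\<tau> i))" by (rule fun_ext3) (use h out in \<open>simp_all add: Tt_def U1_def a algebra_simps\<close>)
  show "U2 g = (\<lambda>i. U2 f (\<tau> i))" by (rule fun_ext3) (use h out in \<open>simp_all add: Tt_def U2_def a algebra_simps\<close>)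
  show "U3 g = (\<lambda>i. U3 f (\<tau> i))" by (rule fun_ext3) (use h out in \<open>simp_all add: U3_def a algebra_simps\<close>)
  show "SG g = of_int (sign \<tau>) * SG f" using h by (simp add: SG_def a algebra_simps)
qed

lemma equiv_case_4:
  fixes f :: "'a::field mag"
  assumes out: "\<And>i. i \<notin> {1,2,3} \<Longrightarrow> \<tau> i = i"
  and h: "\<tau> 1 = 3" "\<tau> 2 = 1" "\<tau> 3 = 2" "sign \<tau> = 1"
  and a: "\<And>a b c. g (P a b c) = f (P (\<tau> a) (\<tau> b) (\<tau> c))"
          "\<And>a b c. g (Q a b c) = f (Q (\<tau> a) (\<tau> b) (\<tau> c))"
  shows "phi g = (Tt f, (\<lambda>i. U1 f (\<tau> i)), (\<lambda>i. U2 f (\<tau> i)), (\<lambda>i. U3 f (\<tau> i)), of_int (sign \<tau>) * SG f)"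
  unfolding phi_def prod.inject
proof (intro conjI)
  show "Tt g = Tt f" using h by (simp add: Tt_def a algebra_simps)
  show "U1 g = (\<lambda>i. U1 f (\<tau> i))" by (rule fun_ext3) (use h out in \<open>simp_all add: Tt_def U1_def a algebra_simps\<close>)
  show "U2 g = (\<lambda>i. U2 f (\<tau> i))" by (rule fun_ext3) (use h out in \<open>simp_all add: Tt_def U2_def a algebra_simps\<close>)
  show "U3 g = (\<lambda>i. U3 f (\<tau> i))" by (rule fun_ext3) (use h out in \<open>simp_all add: U3_def a algebra_simps\<close>)
  show "SG g = of_int (sign \<tau>) * SG f" using h by (simp add: SG_def a algebra_simps)
qed

lemma equiv_case_5:
  fixes f :: "'a::field mag"
  assumes out: "\<And>i. i \<notin> {1,2,3} \<Longrightarrow> \<tau> i = i"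
  and h: "\<tau> 1 = 3" "\<tau> 2 = 2" "\<tau> 3 = 1" "sign \<tau> = -1"
  and a: "\<And>a b c. g (P a b c) = f (P (\<tau> a) (\<tau> b) (\<tau> c))"
          "\<And>a b c. g (Q a b c) = f (Q (\<tau> a) (\<tau> b) (\<tau> c))"
  shows "phi g = (Tt f, (\<lambda>i. U1 f (\<tau> i)), (\<lambda>i. U2 f (\<tau> i)), (\<lambda>i. U3 f (\<tau> i)), of_int (sign \<tau>) * SG f)"
  unfolding phi_def prod.inject
proof (intro conjI)
  show "Tt g = Tt f" using h by (simp add: Tt_def a algebra_simps)
  show "U1 g = (\<lambda>i. U1 f (\<tau> i))" by (rule fun_ext3) (use h out in \<open>simp_all add: Tt_def U1_def a algebra_simps\<close>)
  show "U2 g = (\<lambda>i. U2 f (\<tau> i))" by (rule fun_ext3) (use h out in \<open>simp_all add: Tt_def U2_def a algebra_simps\<close>)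
  show "U3 g = (\<lambda>i. U3 f (\<tau> i))" by (rule fun_ext3) (use h out in \<open>simp_all add: U3_def a algebra_simps\<close>)
  show "SG g = of_int (sign \<tau>) * SG f" using h by (simp add: SG_def a algebra_simps)
qed

lemma phi_equiv:
  assumes s: "\<sigma> permutes {1,2,3::nat}"
  shows "phi (act \<sigma> (f::'a::field mag)) = tact \<sigma> (phi f)"
proof -
  define \<tau> where "\<tau> = inv \<sigma>"
  have t: "\<tau> permutes {1,2,3}" unfolding \<tau>_def by (rule permutes_inv[OF s])
  have ps: "permutation \<sigma>" unfolding permutation_permutes
    using s by (intro exI[of _ "{1,2,3}"] conjI) auto
  have sg: "sign \<sigma> = sign \<tau>" unfolding \<tau>_def by (rule sign_inverse[OF ps, symmetric])
  have out: "\<And>i. i \<notin> {1,2,3} \<Longrightarrow> \<tau> i = i" by (rule permutes_not_in[OF t])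
  have a: "\<And>a b c. act \<sigma> f (P a b c) = f (P (\<tau> a) (\<tau> b) (\<tau> c))"
          "\<And>a b c. act \<sigma> f (Q a b c) = f (Q (\<tau> a) (\<tau> b) (\<tau> c))"
    unfolding act_def \<tau>_def by simp_all
  have pa: "\<And>u. pact \<sigma> u = (\<lambda>i. u (\<tau> i))" unfolding pact_def \<tau>_def by (rule refl)
  have r: "tact \<sigma> (phi f) = (Tt f, (\<lambda>i. U1 f (\<tau> i)), (\<lambda>i. U2 f (\<tau> i)), (\<lambda>i. U3 f (\<tau> i)), of_int (sign \<tau>) * SG f)"
    unfolding tact_def phi_def pa sg by simp
  show ?thesis
    using tau_cases[OF t]
  proof (elim disjE conjE)
     show ?thesis if "\<tau> 1 = 1" "\<tau> 2 = 2" "\<tau> 3 = 3" "sign \<tau> = 1"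
      unfolding r by (rule equiv_case_0[OF out that a])
    next
    show ?thesis if "\<tau> 1 = 1" "\<tau> 2 = 3" "\<tau> 3 = 2" "sign \<tau> = -1"
      unfolding r by (rule equiv_case_1[OF out that a])
    next
    show ?thesis if "\<tau> 1 = 2" "\<tau> 2 = 1" "\<tau> 3 = 3" "sign \<tau> = -1"
      unfolding r by (rule equiv_case_2[OF out that a])
    next
    show ?thesis if "\<tau> 1 = 2" "\<tau> 2 = 3" "\<tau> 3 = 1" "sign \<tau> = 1"
      unfolding r by (rule equiv_case_3[OF out that a])
    next
    show ?thesis if "\<tau> 1 = 3" "\<tau> 2 = 1" "\<tau> 3 = 2" "sign \<tau> = 1"
      unfolding r by (rule equiv_case_4[OF out that a])
    next
    show ?thesis if "\<tau> 1 = 3" "\<tau> 2 = 2" "\<tau> 3 = 1" "sign \<tau> = -1"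
      unfolding r by (rule equiv_case_5[OF out that a])
  qed
qed

theorem proposition4p5p6:
  defines "x \<equiv> (var :: nat \<Rightarrow> 'a::field_char_0 mag)"
  shows "(Prim 2 :: 'a mag set) = {mscale c (bracket (x 1) (x 2)) | c. True}
    \<and> mdim (Prim 3 :: 'a mag set) = 8
    \<and> (Prim 3 :: 'a mag set) =
           mspan ({act \<sigma> (assoc_b (x 1) (x 2) (x 3)) | \<sigma>. \<sigma> permutes {1,2,3}} \<union>
                  {act \<sigma> (bracket (bracket (x 1) (x 2)) (x 3)) | \<sigma>. \<sigma> permutes {1,2,3}})
    \<and> bracket (bracket (x 2) (x 1)) (x 3) = - bracket (bracket (x 1) (x 2)) (x 3)
    \<and> bracket (bracket (x 1) (x 2)) (x 3) + bracket (bracket (x 3) (x 1)) (x 2)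
           + bracket (bracket (x 2) (x 3)) (x 1)
         = assoc_b (x 1) (x 2) (x 3) - assoc_b (x 2) (x 1) (x 3) + assoc_b (x 3) (x 1) (x 2)
           - assoc_b (x 1) (x 3) (x 2) + assoc_b (x 2) (x 3) (x 1) - assoc_b (x 3) (x 2) (x 1)
    \<and> (\<exists>\<phi> :: 'a mag \<Rightarrow> 'a target. sigma3_iso \<phi>)"
proof -
  have 1: "(Prim 2 :: 'a mag set) = {mscale c (bracket (x 1) (x 2)) | c. True}"
    unfolding x_def by (rule Prim2_eq)
  have 2: "mdim (Prim 3 :: 'a mag set) = 8"
    unfolding mdim_def by (rule dim_Prim3)
  have 3: "(Prim 3 :: 'a mag set) =
           mspan ({act \<sigma> (assoc_b (x 1) (x 2) (x 3)) | \<sigma>. \<sigma> permutes {1,2,3}} \<union>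
                  {act \<sigma> (bracket (bracket (x 1) (x 2)) (x 3)) | \<sigma>. \<sigma> permutes {1,2,3}})"
    unfolding x_def mspan_def Gset_eq Gs_def[symmetric] by (rule Prim3_span_Gs[symmetric])
  have 45: "bracket (bracket (x 2) (x 1)) (x 3) = - bracket (bracket (x 1) (x 2)) (x 3)
    \<and> bracket (bracket (x 1) (x 2)) (x 3) + bracket (bracket (x 3) (x 1)) (x 2)
           + bracket (bracket (x 2) (x 3)) (x 1)
         = assoc_b (x 1) (x 2) (x 3) - assoc_b (x 2) (x 1) (x 3) + assoc_b (x 3) (x 1) (x 2)
           - assoc_b (x 1) (x 3) (x 2) + assoc_b (x 2) (x 3) (x 1) - assoc_b (x 3) (x 2) (x 1)"
    unfolding x_def by (rule jac_test)
  have 6: "sigma3_iso (phi :: 'a mag \<Rightarrow> 'a target)"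
    unfolding sigma3_iso_def
  proof (intro conjI ballI allI impI)
    show "bij_betw (phi :: 'a mag \<Rightarrow> 'a target) (Prim 3) Target"
      unfolding bij_betw_def
    proof
      show "inj_on (phi :: 'a mag \<Rightarrow> 'a target) (Prim 3)"
      proof (rule inj_onI)
        fix f g :: "'a mag" assume f: "f \<in> Prim 3" and g: "g \<in> Prim 3" and e: "phi f = phi g"
        have "f = psi (phi f)" using psi_phi[OF f] by simp
        also have "\<dots> = psi (phi g)" using e by simp
        also have "\<dots> = g" using psi_phi[OF g] by simp
        finally show "f = g" .
      qed
      show "phi ` Prim 3 = (Target :: 'a target set)"
      proof
        show "phi ` Prim 3 \<subseteq> (Target :: 'a target set)" using phi_Target by blast
        show "(Target :: 'a target set) \<subseteq> phi ` Prim 3"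
        proof
          fix t :: "'a target" assume t: "t \<in> Target"
          then have "t = phi (psi t)" using phi_psi by metis
          then show "t \<in> phi ` Prim 3" using psi_Prim3[OF t] by blast
        qed
      qed
    qed
  next
    fix f g :: "'a mag" show "phi (f + g) = tadd (phi f) (phi g)" by (rule phi_add)
  next
    fix c :: 'a and f :: "'a mag" show "phi (mscale c f) = tscale c (phi f)" by (rule phi_scale)
  next
    fix \<sigma> :: "nat \<Rightarrow> nat" and f :: "'a mag" assume "\<sigma> permutes {1,2,3}"
    then show "phi (act \<sigma> f) = tact \<sigma> (phi f)" by (rule phi_equiv)
  qed
  show ?thesis using 1 2 3 45 6 by blast
qed

end
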